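(* Let $1<\alpha<2$ and $k_{1/2}(x):=x^{\alpha/2-1}(1-x)^{\alpha/2-1}$ for $x\in(0,1)$. Then \[ \big(D\,\mathbf{D}^{-(2-\alpha)}+D\,\mathbf{D}^{-(2-\alpha)*}\big)k_{1/2}(x)=0,\qquad x\in(0,1). \]
   Context: $D=d/dx$. For $\sigma>0$ and $u$ on $(0,1)$: $\mathbf{D}^{-\sigma}u(x)=\frac{1}{\Gamma(\sigma)}\int_0^x (x-s)^{\sigma-1}u(s)\,ds$ and $\mathbf{D}^{-\sigma*}u(x)=\frac{1}{\Gamma(\sigma)}\int_x^1 (s-x)^{\sigma-1}u(s)\,ds$. *)

theory Defs
  imports "HOL-Analysis.Analysis"
begin

definition frac_int_left :: "real \<Rightarrow> (real \<Rightarrow> real) \<Rightarrow> real \<Rightarrow> real" where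
  "frac_int_left \<sigma> u x = (LINT s:{0..x}|lborel. (x - s) powr (\<sigma> - 1) * u s) / Gamma \<sigma>"

definition frac_int_right :: "real \<Rightarrow> (real \<Rightarrow> real) \<Rightarrow> real \<Rightarrow> real" where
  "frac_int_right \<sigma> u x = (LINT s:{x..1}|lborel. (s - x) powr (\<sigma> - 1) * u s) / Gamma \<sigma>"

end

theory Submission
  imports Defs
begin


lemma keyA:
  fixes s u p :: real
  assumes "0<s" "s<1" "0<u" "u<1"
  defines "D \<equiv> 1 - s + s*u"
  shows "(s*(1-s)*(1-u)/D) powr (2*p-2) * ((s*u/D) powr (-p) * ((1-s)/D) powr (-p)) * (s*(1-s)/D^2)
     = s powr (p-1) * (1-s) powr (p-1) * (u powr (-p) * (1-u) powr (2*p-2))"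
proof -
  have D: "D > 0" unfolding D_def using assms by (smt (verit) mult_pos_pos)
  have "D^2 = D powr 2" using D by (simp add: powr_numeral)
  have l: "ln (LHS::real) = ln RHS \<Longrightarrow> LHS > 0 \<Longrightarrow> RHS > 0 \<Longrightarrow> LHS = RHS" for LHS RHS by simp
  show ?thesis
    apply (rule l)
    using assms D
    apply (simp_all add: ln_mult ln_div ln_powr powr_def ln_realpow)
    apply (simp add: algebra_simps)
    done
qed


definition gg :: "real \<Rightarrow> real \<Rightarrow> real" where "gg p t = t powr (-p) * (1-t) powr (-p)"
definition kk :: "real \<Rightarrow> real \<Rightarrow> real" where "kk p t = t powr (p-1) * (1-t) powr (p-1)"

lemma lemA:
  fixes s p :: real
  assumes p: "1/2 < p" "p < 1" and s: "0<s" "s<1"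
  shows "(\<integral>\<^sup>+t. ennreal ((s - t) powr (2*p-2) * gg p t * indicator {0..s} t) \<partial>lborel)
       = ennreal (kk p s * Beta (1-p) (2*p-1))"
proof -
  define \<phi> where "\<phi> u = s*u/(1-s+s*u)" for u
  define \<phi>' where "\<phi>' u = s*(1-s)/(1-s+s*u)^2" for u
  have Dpos: "1-s+s*u > 0" if "0 \<le> u" for u using s that by (smt (verit) mult_nonneg_nonneg)
  have "(\<integral>\<^sup>+t. ennreal ((s - t) powr (2*p-2) * gg p t * indicator {0..s} t) \<partial>lborel)
     = (\<integral>\<^sup>+t. ennreal ((\<lambda>t. (s - t) powr (2*p-2) * gg p t) t * indicator {\<phi> 0..\<phi> 1} t) \<partial>lborel)"
    by (simp add: \<phi>_def)
  also have "\<dots> = (\<integral>\<^sup>+u. ennreal ((\<lambda>t. (s - t) powr (2*p-2) * gg p t) (\<phi> u) * \<phi>' u * indicator {0..1} u) \<partial>lborel)"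
  proof (rule nn_integral_substitution)
    show "set_borel_measurable borel {\<phi> 0..\<phi> 1} (\<lambda>t. (s - t) powr (2 * p - 2) * gg p t)"
      unfolding set_borel_measurable_def gg_def by measurable
    show "(\<phi> has_real_derivative \<phi>' u) (at u)" if "u \<in> {0..1}" for u
      unfolding \<phi>_def \<phi>'_def using Dpos[of u] that
      by (auto intro!: derivative_eq_intros simp: field_simps power2_eq_square)
    show "continuous_on {0..1} \<phi>'"
      unfolding \<phi>'_def by (intro continuous_intros) (use Dpos in force)
    show "\<phi>' u \<ge> 0" if "u \<in> {0..1}" for u unfolding \<phi>'_def using s by auto
  qed simp
  also have "\<dots> = (\<integral>\<^sup>+u. ennreal (indicator {0..1} u * (kk p s * (u powr ((1-p) - 1) * (1-u) powr ((2*p-1) - 1)))) \<partial>lborel)"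
  proof (rule nn_integral_cong)
    fix u :: real
    show "ennreal ((s - \<phi> u) powr (2*p-2) * gg p (\<phi> u) * \<phi>' u * indicator {0..1} u)
        = ennreal (indicator {0..1} u * (kk p s * (u powr ((1-p) - 1) * (1-u) powr ((2*p-1) - 1))))"
    proof (cases "0 < u \<and> u < 1")
      case True
      have D: "1-s+s*u > 0" using Dpos True by auto
      have e1: "s - \<phi> u = s*(1-s)*(1-u)/(1-s+s*u)" unfolding \<phi>_def using D by (simp add: field_simps)
      have e2: "1 - \<phi> u = (1-s)/(1-s+s*u)" unfolding \<phi>_def using D by (simp add: field_simps)
      show ?thesis using keyA[of s u p] True s
        by (simp add: e1 e2 gg_def kk_def \<phi>'_def mult.assoc) (simp add: \<phi>_def algebra_simps)
    next
      case False
      then consider "u < 0 \<or> u > 1" | "u = 0" | "u = 1" by linarith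
      then show ?thesis by cases (auto simp: \<phi>_def gg_def)
    qed
  qed
  also have "\<dots> = ennreal (kk p s * Beta (1-p) (2*p-1))"
  proof (rule nn_integral_has_integral_lebesgue)
    have B: "((\<lambda>u. u powr ((1-p)-1) * (1-u) powr ((2*p-1)-1)) has_integral Beta (1-p) (2*p-1)) {0..1}"
      by (rule has_integral_Beta_real) (use p in auto)
    show "((\<lambda>u. kk p s * (u powr ((1-p)-1) * (1-u) powr ((2*p-1)-1))) has_integral kk p s * Beta (1-p) (2*p-1)) {0..1}"
      by (rule has_integral_mult_right[OF B])
  qed (use s in \<open>auto simp: kk_def\<close>)
  finally show ?thesis .
qed


lemma lemC:
  fixes t x p :: real
  assumes p: "1/2 < p" "p < 1" and tx: "t < x"
  shows "(\<integral>\<^sup>+s. ennreal ((x - s) powr (1-2*p) * (s - t) powr (2*p-2) * indicator {t..x} s) \<partial>lborel)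
       = ennreal (Beta (2*p-1) (2-2*p))"
proof -
  define \<phi> where "\<phi> u = t + (x-t)*u" for u
  have "(\<integral>\<^sup>+s. ennreal ((x - s) powr (1-2*p) * (s - t) powr (2*p-2) * indicator {t..x} s) \<partial>lborel)
     = (\<integral>\<^sup>+s. ennreal ((\<lambda>s. (x - s) powr (1-2*p) * (s - t) powr (2*p-2)) s * indicator {\<phi> 0..\<phi> 1} s) \<partial>lborel)"
    by (simp add: \<phi>_def)
  also have "\<dots> = (\<integral>\<^sup>+u. ennreal ((\<lambda>s. (x - s) powr (1-2*p) * (s - t) powr (2*p-2)) (\<phi> u) * (\<lambda>_. x - t) u * indicator {0..1} u) \<partial>lborel)"
  proof (rule nn_integral_substitution)
    show "set_borel_measurable borel {\<phi> 0..\<phi> 1} (\<lambda>s. (x - s) powr (1-2*p) * (s - t) powr (2*p-2))"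
      unfolding set_borel_measurable_def by measurable
    show "(\<phi> has_real_derivative (x - t)) (at u)" if "u \<in> {0..1}" for u
      unfolding \<phi>_def by (auto intro!: derivative_eq_intros)
  qed (use tx in auto)
  also have "\<dots> = (\<integral>\<^sup>+u. ennreal (indicator {0..1} u * (u powr ((2*p-1) - 1) * (1-u) powr ((2-2*p) - 1))) \<partial>lborel)"
  proof (rule nn_integral_cong)
    fix u :: real
    show "ennreal ((x - \<phi> u) powr (1-2*p) * (\<phi> u - t) powr (2*p-2) * (x - t) * indicator {0..1} u)
        = ennreal (indicator {0..1} u * (u powr ((2*p-1) - 1) * (1-u) powr ((2-2*p) - 1)))"
    proof (cases "0 < u \<and> u < 1")
      case True
      have e1: "x - \<phi> u = (x-t)*(1-u)" "\<phi> u - t = (x-t)*u" unfolding \<phi>_def by (auto simp: algebra_simps)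
      have e2: "(x-t) powr (1-2*p) * (x-t) powr (2*p-2) * (x-t) = 1"
        using tx by (simp add: powr_add[symmetric] powr_minus field_simps)
      have "(x - \<phi> u) powr (1-2*p) * (\<phi> u - t) powr (2*p-2) * (x - t)
          = ((x-t) powr (1-2*p) * (x-t) powr (2*p-2) * (x-t)) * ((1-u) powr (1-2*p) * u powr (2*p-2))"
        unfolding e1 using True tx by (simp add: powr_mult)
      also have "\<dots> = u powr ((2*p-1) - 1) * (1-u) powr ((2-2*p) - 1)"
        unfolding e2 by (simp add: algebra_simps)
      finally show ?thesis using True by simp
    next
      case False
      then consider "u < 0 \<or> u > 1" | "u = 0" | "u = 1" by linarith
      then show ?thesis by cases (auto simp: \<phi>_def)
    qed
  qed
  also have "\<dots> = ennreal (Beta (2*p-1) (2-2*p))"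
    by (rule nn_integral_has_integral_lebesgue, simp, rule has_integral_Beta_real) (use p in auto)
  finally show ?thesis .
qed


lemma tonelli:
  fixes x p :: real
  assumes p: "1/2 < p" "p < 1" and x: "0 < x" "x < 1"
  shows "(\<integral>\<^sup>+s. ennreal (indicator {0..x} s * ((x-s) powr (1-2*p) * kk p s)) \<partial>lborel) * ennreal (Beta (1-p) (2*p-1))
       = (\<integral>\<^sup>+t. ennreal (indicator {0..<x} t * gg p t) \<partial>lborel) * ennreal (Beta (2*p-1) (2-2*p))"
proof -
  define H where "H s t = ennreal (if 0 \<le> t \<and> t \<le> s \<and> s \<le> x then (x-s) powr (1-2*p) * ((s-t) powr (2*p-2) * gg p t) else 0)" for s t
  have M: "case_prod H \<in> borel_measurable (lborel \<Otimes>\<^sub>M lborel)"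
    unfolding H_def gg_def by measurable
  have Bpos1: "0 \<le> Beta (1-p) (2*p-1)" using p by (auto simp: Beta_def intro!: divide_nonneg_pos Gamma_real_pos less_imp_le)
  have Bpos2: "0 \<le> Beta (2*p-1) (2-2*p)" using p by (auto simp: Beta_def intro!: divide_nonneg_pos Gamma_real_pos less_imp_le)
  have inner_t: "(\<integral>\<^sup>+t. H s t \<partial>lborel) = ennreal (indicator {0..x} s * ((x-s) powr (1-2*p) * kk p s)) * ennreal (Beta (1-p) (2*p-1))" for s
  proof -
    consider "0 < s \<and> s \<le> x" | "s = 0" | "s < 0 \<or> s > x" by linarith
    then show ?thesis
    proof cases
      case 1
      have "(\<integral>\<^sup>+t. H s t \<partial>lborel) = (\<integral>\<^sup>+t. ennreal ((x-s) powr (1-2*p)) * ennreal ((s - t) powr (2*p-2) * gg p t * indicator {0..s} t) \<partial>lborel)"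
        using 1 by (intro nn_integral_cong) (auto simp: H_def gg_def ennreal_mult[symmetric] indicator_def)
      also have "\<dots> = ennreal ((x-s) powr (1-2*p)) * ennreal (kk p s * Beta (1-p) (2*p-1))"
        apply (subst nn_integral_cmult)
        subgoal unfolding gg_def by measurable
        using 1 x p by (simp add: lemA)
      moreover have "0 \<le> kk p s" "0 \<le> (x-s) powr (1-2*p)" by (auto simp: kk_def)
      ultimately show ?thesis using 1 Bpos1
        by (simp del: ennreal_mult' add: ennreal_mult[symmetric] mult.assoc)
    next
      case 2
      have "H s t = 0" for t using 2 by (auto simp: H_def)
      then show ?thesis using 2 by (simp add: kk_def)
    next
      case 3
      have "H s t = 0" for t using 3 by (auto simp: H_def)
      then show ?thesis using 3 by (auto simp: indicator_def)
    qed
  qed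
  have inner_s: "(\<integral>\<^sup>+s. H s t \<partial>lborel) = ennreal (indicator {0..<x} t * gg p t) * ennreal (Beta (2*p-1) (2-2*p))" for t
  proof -
    consider "0 \<le> t \<and> t < x" | "t = x" | "t < 0 \<or> t > x" by linarith
    then show ?thesis
    proof cases
      case 1
      have "(\<integral>\<^sup>+s. H s t \<partial>lborel) = (\<integral>\<^sup>+s. ennreal (gg p t) * ennreal ((x - s) powr (1-2*p) * (s - t) powr (2*p-2) * indicator {t..x} s) \<partial>lborel)"
        using 1 by (intro nn_integral_cong) (auto simp: H_def gg_def ennreal_mult[symmetric] indicator_def mult_ac)
      also have "\<dots> = ennreal (gg p t) * ennreal (Beta (2*p-1) (2-2*p))"
        apply (subst nn_integral_cmult)
        subgoal by measurable
        using 1 x p by (simp add: lemC)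
      finally show ?thesis using 1 by simp
    next
      case 2
      have "H s t = 0" for s using 2 by (auto simp: H_def)
      then show ?thesis using 2 by simp
    next
      case 3
      have "H s t = 0" for s using 3 by (auto simp: H_def)
      then show ?thesis using 3 by (auto simp: indicator_def)
    qed
  qed
  have "(\<integral>\<^sup>+t. (\<integral>\<^sup>+s. H s t \<partial>lborel) \<partial>lborel) = (\<integral>\<^sup>+s. (\<integral>\<^sup>+t. H s t \<partial>lborel) \<partial>lborel)"
    by (rule lborel_pair.Fubini'[OF M])
  moreover have m1: "(\<lambda>s. ennreal (indicator {0..x} s * ((x-s) powr (1-2*p) * kk p s))) \<in> borel_measurable lborel"
    unfolding kk_def by measurable
  moreover have m2: "(\<lambda>t. ennreal (indicator {0..<x} t * gg p t)) \<in> borel_measurable lborel"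
    unfolding gg_def by measurable
  ultimately show ?thesis
    by (simp add: inner_t inner_s nn_integral_multc[OF m1] nn_integral_multc[OF m2])
qed


lemma reflect:
  assumes sym: "\<And>s. f (1 - s) = f s"
  shows "frac_int_right \<sigma> f y = frac_int_left \<sigma> f (1 - y)"
proof -
  have "(LINT s:{y..1}|lborel. (s - y) powr (\<sigma> - 1) * f s)
      = (LINT s|lborel. indicator {y..1} s *\<^sub>R ((s - y) powr (\<sigma> - 1) * f s))"
    by (simp add: set_lebesgue_integral_def)
  also have "\<dots> = \<bar>(-1::real)\<bar> *\<^sub>R (LINT s|lborel. indicator {y..1} (1 + (-1) * s) *\<^sub>R ((1 + (-1) * s - y) powr (\<sigma> - 1) * f (1 + (-1) * s)))"
    by (rule lborel_integral_real_affine) simp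
  also have "\<dots> = (LINT s|lborel. indicator {0..1-y} s *\<^sub>R ((1 - y - s) powr (\<sigma> - 1) * f s))"
    using sym by (simp only: abs_minus_cancel abs_one scaleR_one, intro Bochner_Integration.integral_cong) (auto simp: indicator_def algebra_simps)
  also have "\<dots> = (LINT s:{0..1-y}|lborel. (1 - y - s) powr (\<sigma> - 1) * f s)"
    by (simp add: set_lebesgue_integral_def)
  finally show ?thesis unfolding frac_int_right_def frac_int_left_def by simp
qed

lemma Beta_pos': "0 < a \<Longrightarrow> 0 < b \<Longrightarrow> 0 < Beta a (b::real)"
  by (simp add: Beta_def Gamma_real_pos)

lemma IL:
  fixes p y :: real
  assumes p: "1/2 < p" "p < 1" and y: "0 < y" "y < 1"
  shows "frac_int_left (2-2*p) (kk p) y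
     = Beta (2*p-1) (2-2*p) / Beta (1-p) (2*p-1) / Gamma (2-2*p) * enn2real (\<integral>\<^sup>+t. ennreal (indicator {0..<y} t * gg p t) \<partial>lborel)"
proof -
  define NL where "NL = (\<integral>\<^sup>+s. ennreal (indicator {0..y} s * ((y-s) powr (1-2*p) * kk p s)) \<partial>lborel)"
  define G where "G = (\<integral>\<^sup>+t. ennreal (indicator {0..<y} t * gg p t) \<partial>lborel)"
  have B1: "0 < Beta (1-p) (2*p-1)" and B2: "0 < Beta (2*p-1) (2-2*p)" using p by (auto intro!: Beta_pos')
  have "(LINT s:{0..y}|lborel. (y - s) powr (2-2*p - 1) * kk p s)
      = (LINT s|lborel. indicator {0..y} s * ((y-s) powr (1-2*p) * kk p s))"
    by (simp add: set_lebesgue_integral_def)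
  also have "\<dots> = enn2real NL"
    unfolding NL_def by (rule integral_eq_nn_integral) (auto simp: kk_def)
  finally have L: "(LINT s:{0..y}|lborel. (y - s) powr (2-2*p - 1) * kk p s) = enn2real NL" .
  have "NL * ennreal (Beta (1-p) (2*p-1)) = G * ennreal (Beta (2*p-1) (2-2*p))"
    unfolding NL_def G_def by (rule tonelli[OF p y])
  then have "enn2real NL * Beta (1-p) (2*p-1) = enn2real G * Beta (2*p-1) (2-2*p)"
    using B1 B2 by (metis enn2real_mult enn2real_ennreal less_imp_le)
  then have "enn2real NL = Beta (2*p-1) (2-2*p) / Beta (1-p) (2*p-1) * enn2real G"
    using B1 by (simp add: field_simps)
  then show ?thesis unfolding frac_int_left_def L G_def by simp
qed


lemma gg_cont: "0 < a \<Longrightarrow> b < 1 \<Longrightarrow> continuous_on {a..b} (gg p)"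
  unfolding gg_def by (intro continuous_intros) auto

lemma derivIL:
  fixes p z :: real
  assumes p: "1/2 < p" "p < 1" and z: "0 < z" "z < 1"
  shows "(frac_int_left (2-2*p) (kk p) has_real_derivative
      Beta (2*p-1) (2-2*p) / Beta (1-p) (2*p-1) / Gamma (2-2*p) * gg p z) (at z)"
proof -
  define K where "K = Beta (2*p-1) (2-2*p) / Beta (1-p) (2*p-1) / Gamma (2-2*p)"
  define c where "c = z/2"
  define d where "d = (1+z)/2"
  have cd: "0 < c" "c < z" "z < d" "d < 1" using z by (auto simp: c_def d_def)
  define G where "G y = (\<integral>\<^sup>+t. ennreal (indicator {0..<y} t * gg p t) \<partial>lborel)" for y
  have "G c \<le> (\<integral>\<^sup>+t. ennreal (indicator {0..1} t * gg p t) \<partial>lborel)"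
    unfolding G_def using cd
    by (intro nn_integral_mono ennreal_leI) (auto simp: indicator_def gg_def)
  also have "\<dots> = ennreal (Beta (1-p) (1-p))"
  proof (rule nn_integral_has_integral_lebesgue)
    show "(gg p has_integral Beta (1-p) (1-p)) {0..1}"
      using has_integral_Beta_real[of "1-p" "1-p"] p by (simp add: gg_def[abs_def])
  qed (auto simp: gg_def)
  finally have Gfin: "G c < top" using order.strict_trans1 by fastforce
  have Gy: "G y = G c + ennreal (integral {c..y} (gg p))" if y: "c < y" "y < d" for y
  proof -
    have "G y = (\<integral>\<^sup>+t. ennreal (indicator {0..<c} t * gg p t) + ennreal (indicator {c..y} t * gg p t) \<partial>lborel)"
      unfolding G_def
    proof (rule nn_integral_cong_AE)
      show "AE t in lborel. ennreal (indicator {0..<y} t * gg p t) = ennreal (indicator {0..<c} t * gg p t) + ennreal (indicator {c..y} t * gg p t)"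
        using AE_lborel_singleton[of y]
        by eventually_elim (use y cd in \<open>auto simp: indicator_def gg_def\<close>)
    qed
    also have "\<dots> = G c + (\<integral>\<^sup>+t. ennreal (indicator {c..y} t * gg p t) \<partial>lborel)"
      unfolding G_def by (rule nn_integral_add) (auto simp: gg_def)
    also have "(\<integral>\<^sup>+t. ennreal (indicator {c..y} t * gg p t) \<partial>lborel) = ennreal (integral {c..y} (gg p))"
    proof (rule nn_integral_has_integral_lebesgue)
      show "(gg p has_integral integral {c..y} (gg p)) {c..y}"
        using gg_cont[of c y p] cd y by (intro integrable_integral integrable_continuous_interval) auto
    qed (auto simp: gg_def)
    finally show ?thesis .
  qed
  have eq: "frac_int_left (2-2*p) (kk p) y = K * (enn2real (G c) + integral {c..y} (gg p))"
    if y: "y \<in> {c<..<d}" for y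
  proof -
    have I0: "0 \<le> integral {c..y} (gg p)"
      by (rule integral_nonneg) (use gg_cont[of c y p] cd y in \<open>auto intro: integrable_continuous_interval simp: gg_def\<close>)
    have "frac_int_left (2-2*p) (kk p) y = K * enn2real (G y)"
      using IL[OF p, of y] y cd unfolding K_def G_def by auto
    also have "enn2real (G y) = enn2real (G c) + integral {c..y} (gg p)"
      using Gy[of y] y Gfin I0 by (simp add: enn2real_plus)
    finally show ?thesis .
  qed
  have "((\<lambda>y. integral {c..y} (gg p)) has_real_derivative gg p z) (at z within {c..d})"
    by (rule integral_has_real_derivative) (use gg_cont[of c d p] cd in auto)
  then have "((\<lambda>y. integral {c..y} (gg p)) has_real_derivative gg p z) (at z)"
    using cd by (simp add: at_within_Icc_at)
  then have "((\<lambda>y. K * (enn2real (G c) + integral {c..y} (gg p))) has_real_derivative K * gg p z) (at z)"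
    by (auto intro!: derivative_eq_intros)
  then show ?thesis unfolding K_def[symmetric]
    by (rule has_field_derivative_transform_within_open[where S="{c<..<d}"]) (use cd eq in auto)
qed


theorem lemma4p1:
  fixes \<alpha> x :: real
  assumes "1 < \<alpha>" "\<alpha> < 2" "0 < x" "x < 1"
  defines "k \<equiv> (\<lambda>y::real. y powr (\<alpha>/2 - 1) * (1 - y) powr (\<alpha>/2 - 1))"
  shows "\<exists>d1 d2. (frac_int_left (2 - \<alpha>) k has_real_derivative d1) (at x)
              \<and> (frac_int_right (2 - \<alpha>) k has_real_derivative d2) (at x)
              \<and> d1 + d2 = 0"
proof -
  define p where "p = \<alpha>/2"
  have p: "1/2 < p" "p < 1" using assms by (auto simp: p_def)
  have a: "2 - \<alpha> = 2 - 2*p" by (simp add: p_def)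
  have kk: "k = kk p" unfolding k_def kk_def p_def by simp
  define K where "K = Beta (2*p-1) (2-2*p) / Beta (1-p) (2*p-1) / Gamma (2-2*p)"
  have d1: "(frac_int_left (2 - \<alpha>) k has_real_derivative K * gg p x) (at x)"
    unfolding a kk K_def using derivIL[OF p] assms by auto
  have sym: "kk p (1 - s) = kk p s" for s by (simp add: kk_def)
  have R: "frac_int_right (2 - \<alpha>) k = (\<lambda>y. frac_int_left (2 - \<alpha>) k (1 - y))"
    unfolding kk by (rule ext, rule reflect, rule sym)
  have "((\<lambda>y. frac_int_left (2 - \<alpha>) k (1 - y)) has_real_derivative K * gg p (1 - x) * (-1)) (at x)"
  proof (rule DERIV_chain'[where f="\<lambda>y. 1 - y"])
    show "((\<lambda>y. 1 - y) has_real_derivative -1) (at x)" by (auto intro!: derivative_eq_intros)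
    show "(frac_int_left (2 - \<alpha>) k has_real_derivative K * gg p (1 - x)) (at (1 - x))"
      unfolding a kk K_def using derivIL[OF p] assms by auto
  qed
  moreover have "gg p (1 - x) = gg p x" by (simp add: gg_def)
  ultimately have d2: "(frac_int_right (2 - \<alpha>) k has_real_derivative - (K * gg p x)) (at x)"
    unfolding R by simp
  show ?thesis using d1 d2 by (intro exI[of _ "K * gg p x"] exI[of _ "- (K * gg p x)"]) auto
qed

end
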